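(* Fix integers $d\ge 2$ and $n$ with $d+2\leq n\leq 2d$. Every $n$-point softmax code $X$ in $S^{d-1}$ has no softmax rattler.
   Context: $[n]=\{1,\ldots,n\}$. For a configuration $X=\{x_i\}_{i\in[n]}$ in the unit sphere $S^{d-1}\subseteq\mathbb{R}^d$, $\delta(X):=\min_{j\in[n]}\operatorname{dist}(x_j,\operatorname{conv}\{x_i\}_{i\in[n]\setminus\{j\}})$. A softmax code is an $n$-point configuration in $S^{d-1}$ maximizing $\delta$. A softmax rattler of $X$ is an index $j\in[n]$ with $\operatorname{dist}(x_j,\operatorname{conv}\{x_i\}_{i\in[n]\setminus\{j\}})>\delta(X)$. *)

theory Defs
  imports "HOL-Analysis.Analysis"
begin

definition sm_dist :: "nat \<Rightarrow> (nat \<Rightarrow> 'a::euclidean_space) \<Rightarrow> nat \<Rightarrow> real" where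
  "sm_dist n x j = infdist (x j) (convex hull (x ` ({1..n} - {j})))"

definition sm_delta :: "nat \<Rightarrow> (nat \<Rightarrow> 'a::euclidean_space) \<Rightarrow> real" where
  "sm_delta n x = Min ((\<lambda>j. sm_dist n x j) ` {1..n})"

definition on_sphere_config :: "nat \<Rightarrow> (nat \<Rightarrow> 'a::euclidean_space) \<Rightarrow> bool" where
  "on_sphere_config n x \<longleftrightarrow> (\<forall>i\<in>{1..n}. x i \<in> sphere 0 1)"

definition softmax_code :: "nat \<Rightarrow> (nat \<Rightarrow> 'a::euclidean_space) \<Rightarrow> bool" where
  "softmax_code n x \<longleftrightarrow> on_sphere_config n x \<and>
     (\<forall>y::nat \<Rightarrow> 'a. on_sphere_config n y \<longrightarrow> sm_delta n y \<le> sm_delta n x)"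

definition softmax_rattler :: "nat \<Rightarrow> (nat \<Rightarrow> 'a::euclidean_space) \<Rightarrow> nat \<Rightarrow> bool" where
  "softmax_rattler n x j \<longleftrightarrow> j \<in> {1..n} \<and> sm_dist n x j > sm_delta n x"

end

theory Submission
  imports Defs
begin

lemma dist_ge_one:
  fixes v :: "'a::euclidean_space"
  assumes "norm v = 1" "T \<noteq> {}" "\<forall>t\<in>T. inner v t \<le> 0"
  shows "1 \<le> infdist v (convex hull T)"
proof -
  have sub: "convex hull T \<subseteq> {z. inner v z \<le> 0}"
    by (rule hull_minimal) (use assms convex_halfspace_le in auto)
  have "1 \<le> dist v z" if "z \<in> convex hull T" for z
  proof -
    have "inner v z \<le> 0" using sub that by auto
    moreover have "(norm (v - z))^2 = (norm v)^2 - 2 * inner v z + (norm z)^2"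
      by (simp add: power2_norm_eq_inner inner_diff inner_commute)
    moreover have "(norm v)^2 = 1" using assms(1) by simp
    moreover have "0 \<le> (norm z)^2" by simp
    ultimately have "1 \<le> (norm (v - z))^2" by linarith
    then show ?thesis
      by (metis abs_norm_cancel dist_norm one_le_power power2_le_imp_le one_power2 norm_ge_zero)
  qed
  moreover have "convex hull T \<noteq> {}" using assms(2) by simp
  ultimately show ?thesis by (simp add: infdist_notempty cINF_greatest)
qed

lemma zero_in_hull:
  fixes S :: "'a::euclidean_space set"
  assumes "finite S" "(\<Sum>v\<in>S. u v *\<^sub>R v) = 0" "\<forall>v\<in>S. 0 \<le> u v" "0 < sum u S"
  shows "0 \<in> convex hull S"
proof -
  let ?w = "\<lambda>v. u v / sum u S"
  have "(\<Sum>x\<in>S. ?w x *\<^sub>R x) = (1 / sum u S) *\<^sub>R (\<Sum>x\<in>S. u x *\<^sub>R x)"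
    by (simp add: scaleR_sum_right)
  then have "(\<Sum>x\<in>S. ?w x *\<^sub>R x) = 0" using assms(2) by simp
  then have "(\<forall>x\<in>S. 0 \<le> ?w x) \<and> sum ?w S = 1 \<and> (\<Sum>x\<in>S. ?w x *\<^sub>R x) = 0"
    using assms by (auto simp: sum_divide_distrib[symmetric])
  then show ?thesis using assms(1) by (auto simp: convex_hull_finite)
qed

lemma pos_part:
  fixes S :: "'a::euclidean_space set"
  assumes fin: "finite S" and dep: "(\<Sum>v\<in>S. u v *\<^sub>R v) = 0" and nz: "\<exists>v\<in>S. u v \<noteq> 0"
    and n0: "0 \<notin> convex hull S"
  shows "0 < (\<Sum>v\<in>S. max (u v) 0)"
proof (rule ccontr)
  assume "\<not> ?thesis"
  then have "(\<Sum>v\<in>S. max (u v) 0) = 0"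
    by (metis (no_types, lifting) linorder_not_less max.cobounded2 order_antisym sum_nonneg)
  then have "\<forall>v\<in>S. max (u v) 0 = 0" using fin by (subst (asm) sum_nonneg_eq_0_iff) auto
  then have le: "\<forall>v\<in>S. u v \<le> 0" by (metis max.cobounded1)
  obtain v0 where v0: "v0 \<in> S" "u v0 \<noteq> 0" using nz by auto
  have "0 < sum (\<lambda>v. - u v) S"
    using v0 le fin by (intro sum_pos2[of S v0]) (auto simp: order.strict_iff_order)
  moreover have "(\<Sum>v\<in>S. (- u v) *\<^sub>R v) = 0" using dep by (simp add: sum_negf)
  ultimately have "0 \<in> convex hull S" using zero_in_hull[OF fin, of "\<lambda>v. - u v"] le by auto
  then show False using n0 by simp
qed

lemma core:
  fixes S :: "'a::euclidean_space set" and u :: "'a \<Rightarrow> real"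
  assumes fin: "finite S" and unit: "\<forall>v\<in>S. norm v = 1" and n0: "0 \<notin> convex hull S"
    and dep: "(\<Sum>v\<in>S. u v *\<^sub>R v) = 0"
    and apos: "0 < (\<Sum>v\<in>S. max (u v) 0)"
    and ab: "(\<Sum>v\<in>S. max (u v) 0) \<le> (\<Sum>v\<in>S. max (- u v) 0)"
  shows "\<exists>w\<in>S. \<exists>N. N \<subseteq> S - {w} \<and> (\<exists>q\<in>convex hull N. dist w q < 1)"
proof -
  define a where "a = (\<Sum>v\<in>S. max (u v) 0)"
  define b where "b = (\<Sum>v\<in>S. max (- u v) 0)"
  have a0: "0 < a" and b0: "0 < b" and ab': "a \<le> b" using apos ab by (auto simp: a_def b_def)
  define \<mu> where "\<mu> v = max (u v) 0 / a" for v
  define \<nu> where "\<nu> v = max (- u v) 0 / b" for v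
  define p where "p = (\<Sum>v\<in>S. \<mu> v *\<^sub>R v)"
  define q where "q = (\<Sum>v\<in>S. \<nu> v *\<^sub>R v)"
  define N where "N = {v\<in>S. u v < 0}"
  have split: "u v *\<^sub>R v = max (u v) 0 *\<^sub>R v - max (- u v) 0 *\<^sub>R v" for v
    by (simp add: max_def scaleR_left_diff_distrib[symmetric])
  have eq: "(\<Sum>v\<in>S. max (u v) 0 *\<^sub>R v) = (\<Sum>v\<in>S. max (- u v) 0 *\<^sub>R v)"
    using dep by (simp add: split sum_subtractf)
  have pa: "a *\<^sub>R p = (\<Sum>v\<in>S. max (u v) 0 *\<^sub>R v)"
    using a0 by (simp add: p_def \<mu>_def scaleR_sum_right)
  have qb: "b *\<^sub>R q = (\<Sum>v\<in>S. max (- u v) 0 *\<^sub>R v)"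
    using b0 by (simp add: q_def \<nu>_def scaleR_sum_right)
  define s where "s = a / b"
  have s0: "0 < s" and s1: "s \<le> 1" using a0 b0 ab' by (auto simp: s_def)
  have qp: "q = s *\<^sub>R p"
  proof -
    have "b *\<^sub>R q = a *\<^sub>R p" using pa qb eq by simp
    then have "q = (1/b) *\<^sub>R (a *\<^sub>R p)" using b0 by (metis scaleR_one scaleR_scaleR nonzero_divide_eq_eq less_irrefl divide_self_if times_divide_eq_left mult.commute)
    then show ?thesis by (simp add: s_def)
  qed
  have \<mu>sum: "sum \<mu> S = 1" using a0 by (simp add: \<mu>_def a_def[symmetric] sum_divide_distrib[symmetric])
  have \<mu>nn: "\<forall>v\<in>S. 0 \<le> \<mu> v" using a0 by (simp add: \<mu>_def)
  have "p \<in> convex hull S" using fin \<mu>sum \<mu>nn by (auto simp: convex_hull_finite p_def)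
  then have p0: "p \<noteq> 0" using n0 by auto
  have finN: "finite N" using fin by (simp add: N_def)
  have NS: "N \<subseteq> S" by (auto simp: N_def)
  have \<nu>out: "\<forall>v\<in>S - N. \<nu> v = 0" by (auto simp: \<nu>_def N_def)
  have "sum \<nu> N = sum \<nu> S" by (rule sum.mono_neutral_left[OF fin NS]) (use \<nu>out in auto)
  also have "\<dots> = 1" using b0 by (simp add: \<nu>_def b_def[symmetric] sum_divide_distrib[symmetric])
  finally have \<nu>sum: "sum \<nu> N = 1" .
  have "(\<Sum>v\<in>N. \<nu> v *\<^sub>R v) = q" unfolding q_def
    by (rule sum.mono_neutral_left[OF fin NS]) (use \<nu>out in auto)
  moreover have "\<forall>v\<in>N. 0 \<le> \<nu> v" using b0 by (simp add: \<nu>_def)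
  ultimately have qN: "q \<in> convex hull N" using finN \<nu>sum by (auto simp: convex_hull_finite)
  show ?thesis
  proof (rule ccontr)
    assume H: "\<not> ?thesis"
    have far: "1 \<le> dist v q" if "v \<in> S" "0 < u v" for v
    proof -
      have "N \<subseteq> S - {v}" using that by (auto simp: N_def)
      then show ?thesis using H qN that by (meson not_le)
    qed
    have ge: "\<mu> v \<le> \<mu> v * (norm (v - q))^2" if "v \<in> S" for v
    proof (cases "0 < u v")
      case True
      then have "1 \<le> norm (v - q)" using far that by (simp add: dist_norm)
      then have "1 \<le> (norm (v - q))^2" by (simp add: one_le_power)
      moreover have "0 \<le> \<mu> v" using \<mu>nn that by simp
      ultimately show ?thesis by (metis mult.right_neutral mult_left_mono)
    next
      case False
      then show ?thesis by (simp add: \<mu>_def)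
    qed
    have expand: "(norm (v - q))^2 = 1 - 2 * inner v q + inner q q" if "v \<in> S" for v
    proof -
      have "(norm v)^2 = 1" using unit that by simp
      then show ?thesis by (simp add: power2_norm_eq_inner inner_diff inner_commute)
    qed
    have "1 \<le> (\<Sum>v\<in>S. \<mu> v * (norm (v - q))^2)"
      using \<mu>sum sum_mono[of S \<mu> "\<lambda>v. \<mu> v * (norm (v - q))^2"] ge by simp
    also have "\<dots> = (\<Sum>v\<in>S. \<mu> v - 2 * inner (\<mu> v *\<^sub>R v) q + \<mu> v * inner q q)"
      by (rule sum.cong) (auto simp: expand algebra_simps)
    also have "\<dots> = 1 - 2 * inner p q + inner q q"
      by (simp add: sum.distrib sum_subtractf \<mu>sum p_def inner_sum_left sum_distrib_left[symmetric]
          sum_distrib_right[symmetric])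
    also have "\<dots> = 1 - s * (2 - s) * inner p p"
      by (simp add: qp algebra_simps)
    finally have "s * (2 - s) * inner p p \<le> 0" by simp
    moreover have "0 < s * (2 - s) * inner p p" using s0 s1 p0 by simp
    ultimately show False by simp
  qed
qed

lemma construct:
  assumes "n \<le> 2 * DIM('a::euclidean_space)" "2 \<le> n"
  shows "\<exists>y::nat \<Rightarrow> 'a. on_sphere_config n y \<and> 1 \<le> sm_delta n y"
proof -
  define d where "d = DIM('a)"
  obtain bs :: "'a list" where bs: "set bs = Basis" "distinct bs"
    using finite_distinct_list[of "Basis :: 'a set"] by auto
  have len: "length bs = d" using bs distinct_card[of bs] by (simp add: d_def)
  have inb: "bs ! k \<in> Basis" if "k < d" for k using bs len that by (metis nth_mem)
  have ib: "inner (bs ! k) (bs ! l) = (if k = l then 1 else 0)" if "k < d" "l < d" for k l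
    using inb[OF that(1)] inb[OF that(2)] bs(2) len that by (simp add: inner_Basis nth_eq_iff_index_eq)
  define y :: "nat \<Rightarrow> 'a" where "y i = (if i \<le> d then bs ! (i - 1) else - (bs ! (i - d - 1)))" for i
  have sph: "norm (y i) = 1" if "i \<in> {1..n}" for i
  proof -
    have "i \<le> 2 * d" using that assms by (simp add: d_def)
    then show ?thesis using that inb[of "i - 1"] inb[of "i - d - 1"]
      by (auto simp: y_def)
  qed
  have orth: "inner (y i) (y k) \<le> 0" if "i \<in> {1..n}" "k \<in> {1..n}" "i \<noteq> k" for i k
  proof -
    have "i \<le> 2 * d" "k \<le> 2 * d" using that assms by (auto simp: d_def)
    then show ?thesis using that by (auto simp: y_def ib)
  qed
  have dist1: "1 \<le> sm_dist n y j" if "j \<in> {1..n}" for j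
  proof -
    have "{1..n} - {j} \<noteq> {}"
    proof -
      have "(if j = 1 then 2 else 1) \<in> {1..n} - {j}" using that assms by auto
      then show ?thesis by blast
    qed
    then show ?thesis unfolding sm_dist_def
      by (intro dist_ge_one) (use sph that orth in auto)
  qed
  have "1 \<le> sm_delta n y" unfolding sm_delta_def using assms dist1 by (subst Min_ge_iff) auto
  moreover have "on_sphere_config n y" using sph by (simp add: on_sphere_config_def)
  ultimately show ?thesis by blast
qed

theorem lemma8:
  fixes n :: nat and x :: "nat \<Rightarrow> 'a::euclidean_space"
  assumes "DIM('a) \<ge> 2" and "DIM('a) + 2 \<le> n" and "n \<le> 2 * DIM('a)"
    and "softmax_code n x"
  shows "\<not> (\<exists>j. softmax_rattler n x j)"
proof
  assume "\<exists>j. softmax_rattler n x j"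
  then obtain j where j: "j \<in> {1..n}" and jr: "sm_dist n x j > sm_delta n x"
    by (auto simp: softmax_rattler_def)
  have sph: "\<forall>i\<in>{1..n}. norm (x i) = 1"
    using assms(4) by (simp add: softmax_code_def on_sphere_config_def)
  obtain y :: "nat \<Rightarrow> 'a" where "on_sphere_config n y" "1 \<le> sm_delta n y"
    using construct[of n] assms(2,3) by auto
  then have d1: "1 \<le> sm_delta n x" using assms(4) unfolding softmax_code_def by force
  have le: "sm_delta n x \<le> sm_dist n x i" if "i \<in> {1..n}" for i
    unfolding sm_delta_def using that by (intro Min_le) auto
  have inj: "inj_on x {1..n}"
  proof (rule inj_onI, rule ccontr)
    fix i k assume ik: "i \<in> {1..n}" "k \<in> {1..n}" "x i = x k" "i \<noteq> k"
    then have "x i \<in> convex hull (x ` ({1..n} - {i}))"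
      by (intro hull_inc) (metis Diff_iff image_eqI singletonD)
    then have "sm_dist n x i = 0" by (simp add: sm_dist_def)
    then show False using le[OF ik(1)] d1 by simp
  qed
  define I where "I = {1..n} - {j}"
  define S where "S = x ` I"
  have finS: "finite S" by (simp add: S_def I_def)
  have unitS: "\<forall>v\<in>S. norm v = 1" using sph by (auto simp: S_def I_def)
  have n0: "0 \<notin> convex hull S"
  proof
    assume "0 \<in> convex hull S"
    then have "sm_dist n x j \<le> dist (x j) 0" unfolding sm_dist_def S_def I_def by (rule infdist_le)
    then show False using sph j jr d1 by simp
  qed
  have "card S = n - 1" unfolding S_def I_def
    using inj j by (simp add: card_image inj_on_subset[OF inj])
  then have "\<not> card S \<le> DIM('a)" using assms(2) by linarith
  then have "\<not> independent S" using independent_bound[of S] by blast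
  then obtain u where nz: "\<exists>v\<in>S. u v \<noteq> 0" and dep: "(\<Sum>v\<in>S. u v *\<^sub>R v) = 0"
    using dependent_finite[OF finS] by auto
  have a0: "0 < (\<Sum>v\<in>S. max (u v) 0)" by (rule pos_part[OF finS dep nz n0])
  have b0: "0 < (\<Sum>v\<in>S. max (- u v) 0)"
    by (rule pos_part[OF finS _ _ n0]) (use dep nz in \<open>auto simp: sum_negf\<close>)
  have "\<exists>w\<in>S. \<exists>N. N \<subseteq> S - {w} \<and> (\<exists>q\<in>convex hull N. dist w q < 1)"
  proof (cases "(\<Sum>v\<in>S. max (u v) 0) \<le> (\<Sum>v\<in>S. max (- u v) 0)")
    case True
    then show ?thesis by (rule core[OF finS unitS n0 dep a0])
  next
    case False
    show ?thesis
      by (rule core[OF finS unitS n0, of "\<lambda>v. - u v"]) (use dep b0 False in \<open>auto simp: sum_negf\<close>)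
  qed
  then obtain w N q where w: "w \<in> S" and N: "N \<subseteq> S - {w}" and q: "q \<in> convex hull N"
    and wq: "dist w q < 1" by blast
  obtain i where i: "i \<in> I" and wi: "w = x i" using w by (auto simp: S_def)
  have "N \<subseteq> x ` ({1..n} - {i})" using N wi by (auto simp: S_def I_def)
  then have "q \<in> convex hull (x ` ({1..n} - {i}))" using q hull_mono by blast
  then have "sm_dist n x i \<le> dist (x i) q" unfolding sm_dist_def by (rule infdist_le)
  moreover have "i \<in> {1..n}" using i by (simp add: I_def)
  ultimately show False using le d1 wq wi by fastforce
qed

end
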